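(* If $S$ is an IP-regular partial semigroup with only finitely many idempotent elements, then every nonprincipal strongly productive ultrafilter on $S$ is regular.
   Context: A partial semigroup is a set $P$ with a partially defined multiplication such that $(ab)c=a(bc)$ whenever both sides are defined. Any subset $X\subseteq P$ is a partial semigroup with the restricted operation ($ab$ defined in $X$ iff $a,b\in X$ and $ab$ is defined in $P$ and lies in $X$). An element $a$ is idempotent if $aa$ is defined and equals $a$; $E(P)$ is the set of idempotents. For a sequence $\vec{x}=(x_n)_{n\in\omega}$ in $P$ such that all products $\prod_{i\in a}x_i$ (increasing order of indices, $a$ finite nonempty subset of $\omega$) are defined, $\mathrm{FP}(\vec{x})$ is the set of these products and $\mathrm{FP}_k(\vec{x})=\mathrm{FP}((x_{n+k})_n)$. A subset of $P$ is an IP-set if it contains such an $\mathrm{FP}(\vec{x})$. An ultrafilter $p$ on $P$ is strongly productive if every $A\in p$ contains some $\mathrm{FP}(\vec{x})\in p$; a nonprincipal strongly productive $p$ is regular if some $B\in p$ has the property that whenever all finite products of $\vec{x}$ are defined and lie in $B$, the set $x_0\mathrm{FP}_1(\vec{x})$ is not in $p$. $P$ is strongly IP-regular if for every sequence $\vec{x}$ in $P$ all of whose finite products are defined, the set $x_0\mathrm{FP}_1(\vec{x})$ is not an IP-set (in $P$). $P$ is IP-regular if $P\setminus E(P)$ is a union of finitely many subsets each of which is strongly IP-regular (with the induced partial semigroup structure). *)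

theory Defs
  imports Main
begin

text \<open>A partial semigroup is given by a carrier P and a partial multiplication
  m :: 'a => 'a => 'a option (None = undefined), defined only on elements of P
  with values in P.\<close>

definition psemigroup :: "'a set \<Rightarrow> ('a \<Rightarrow> 'a \<Rightarrow> 'a option) \<Rightarrow> bool" where
  "psemigroup P m \<longleftrightarrow>
     (\<forall>a b c. m a b = Some c \<longrightarrow> a \<in> P \<and> b \<in> P \<and> c \<in> P) \<and>
     (\<forall>a b c ab bc x y. m a b = Some ab \<longrightarrow> m ab c = Some x \<longrightarrow>
                        m b c = Some bc \<longrightarrow> m a bc = Some y \<longrightarrow> x = y)"

definition restr :: "'a set \<Rightarrow> ('a \<Rightarrow> 'a \<Rightarrow> 'a option) \<Rightarrow> 'a \<Rightarrow> 'a \<Rightarrow> 'a option" where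
  "restr X m a b = (if a \<in> X \<and> b \<in> X \<and> (\<exists>c\<in>X. m a b = Some c) then m a b else None)"

definition idempotents :: "'a set \<Rightarrow> ('a \<Rightarrow> 'a \<Rightarrow> 'a option) \<Rightarrow> 'a set" where
  "idempotents P m = {a \<in> P. m a a = Some a}"

fun lprod :: "('a \<Rightarrow> 'a \<Rightarrow> 'a option) \<Rightarrow> 'a list \<Rightarrow> 'a option" where
  "lprod m [] = None"
| "lprod m (x # xs) = fold (\<lambda>y acc. Option.bind acc (\<lambda>a. m a y)) xs (Some x)"

definition fprod :: "('a \<Rightarrow> 'a \<Rightarrow> 'a option) \<Rightarrow> (nat \<Rightarrow> 'a) \<Rightarrow> nat set \<Rightarrow> 'a option" where
  "fprod m x F = lprod m (map x (sorted_list_of_set F))"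

definition FP_seq :: "'a set \<Rightarrow> ('a \<Rightarrow> 'a \<Rightarrow> 'a option) \<Rightarrow> (nat \<Rightarrow> 'a) \<Rightarrow> bool" where
  "FP_seq P m x \<longleftrightarrow> (\<forall>n. x n \<in> P) \<and>
     (\<forall>F. finite F \<and> F \<noteq> {} \<longrightarrow> fprod m x F \<noteq> None)"

definition FP :: "('a \<Rightarrow> 'a \<Rightarrow> 'a option) \<Rightarrow> (nat \<Rightarrow> 'a) \<Rightarrow> 'a set" where
  "FP m x = {c. \<exists>F. finite F \<and> F \<noteq> {} \<and> fprod m x F = Some c}"

definition FPk :: "('a \<Rightarrow> 'a \<Rightarrow> 'a option) \<Rightarrow> nat \<Rightarrow> (nat \<Rightarrow> 'a) \<Rightarrow> 'a set" where
  "FPk m k x = FP m (\<lambda>n. x (n + k))"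

definition x0FP1 :: "('a \<Rightarrow> 'a \<Rightarrow> 'a option) \<Rightarrow> (nat \<Rightarrow> 'a) \<Rightarrow> 'a set" where
  "x0FP1 m x = {c. \<exists>d \<in> FPk m 1 x. m (x 0) d = Some c}"

definition IP_set :: "'a set \<Rightarrow> ('a \<Rightarrow> 'a \<Rightarrow> 'a option) \<Rightarrow> 'a set \<Rightarrow> bool" where
  "IP_set P m A \<longleftrightarrow> (\<exists>x. FP_seq P m x \<and> FP m x \<subseteq> A)"

definition ultrafilter_on :: "'a set \<Rightarrow> 'a set set \<Rightarrow> bool" where
  "ultrafilter_on P U \<longleftrightarrow> U \<subseteq> Pow P \<and> P \<in> U \<and> {} \<notin> U \<and>
     (\<forall>A\<in>U. \<forall>B\<in>U. A \<inter> B \<in> U) \<and>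
     (\<forall>A\<in>U. \<forall>B. A \<subseteq> B \<and> B \<subseteq> P \<longrightarrow> B \<in> U) \<and>
     (\<forall>A. A \<subseteq> P \<longrightarrow> A \<in> U \<or> P - A \<in> U)"

definition nonprincipal :: "'a set \<Rightarrow> 'a set set \<Rightarrow> bool" where
  "nonprincipal P U \<longleftrightarrow> (\<forall>a\<in>P. {a} \<notin> U)"

definition strongly_productive :: "'a set \<Rightarrow> ('a \<Rightarrow> 'a \<Rightarrow> 'a option) \<Rightarrow> 'a set set \<Rightarrow> bool" where
  "strongly_productive P m U \<longleftrightarrow>
     (\<forall>A\<in>U. \<exists>x. FP_seq P m x \<and> FP m x \<subseteq> A \<and> FP m x \<in> U)"

definition regular_uf :: "'a set \<Rightarrow> ('a \<Rightarrow> 'a \<Rightarrow> 'a option) \<Rightarrow> 'a set set \<Rightarrow> bool" where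
  "regular_uf P m U \<longleftrightarrow> nonprincipal P U \<and> strongly_productive P m U \<and>
     (\<exists>B\<in>U. \<forall>x. FP_seq P m x \<and> FP m x \<subseteq> B \<longrightarrow> x0FP1 m x \<notin> U)"

definition strongly_IP_regular :: "'a set \<Rightarrow> ('a \<Rightarrow> 'a \<Rightarrow> 'a option) \<Rightarrow> bool" where
  "strongly_IP_regular P m \<longleftrightarrow> (\<forall>x. FP_seq P m x \<longrightarrow> \<not> IP_set P m (x0FP1 m x))"

definition IP_regular :: "'a set \<Rightarrow> ('a \<Rightarrow> 'a \<Rightarrow> 'a option) \<Rightarrow> bool" where
  "IP_regular P m \<longleftrightarrow> (\<exists>Xs. finite Xs \<and> \<Union>Xs = P - idempotents P m \<and>
     (\<forall>X\<in>Xs. strongly_IP_regular X (restr X m)))"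

end

theory Submission
  imports Defs
begin

lemma sl_set_sorted:
  fixes L :: "nat list"
  assumes "sorted L" "distinct L"
  shows "sorted_list_of_set (set L) = L"
  using assms by (simp add: sorted_list_of_set_sort_remdups distinct_remdups_id sorted_sort_id)

lemma lprod_snoc:
  "xs \<noteq> [] \<Longrightarrow> lprod m (xs @ [y]) = Option.bind (lprod m xs) (\<lambda>a. m a y)"
  by (cases xs) auto

lemma lprod_restr:
  "set xs \<subseteq> X \<Longrightarrow> (\<forall>k. 1 \<le> k \<and> k \<le> length xs \<longrightarrow> (\<exists>c\<in>X. lprod m (take k xs) = Some c))
   \<Longrightarrow> lprod (restr X m) xs = lprod m xs"
proof (induction xs rule: rev_induct)
  case Nil
  then show ?case by simp
next
  case (snoc y xs)
  show ?case
  proof (cases "xs = []")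
    case True
    then show ?thesis by simp
  next
    case False
    have IH: "lprod (restr X m) xs = lprod m xs"
    proof (rule snoc.IH)
      show "set xs \<subseteq> X" using snoc.prems by auto
      show "\<forall>k. 1 \<le> k \<and> k \<le> length xs \<longrightarrow> (\<exists>c\<in>X. lprod m (take k xs) = Some c)"
        using snoc.prems(2) by auto
    qed
    from snoc.prems(2)[rule_format, of "length xs"] False
    obtain a where a: "a \<in> X" "lprod m xs = Some a"
      by (auto simp: Suc_le_eq)
    from snoc.prems(2)[rule_format, of "Suc (length xs)"]
    obtain c where c: "c \<in> X" "lprod m (xs @ [y]) = Some c" by auto
    have mc: "m a y = Some c" using c a lprod_snoc[OF False, of m y] by simp
    have y: "y \<in> X" using snoc.prems by auto
    have "restr X m a y = m a y" using a y c mc by (auto simp: restr_def)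
    then show ?thesis using IH lprod_snoc[OF False] a mc by simp
  qed
qed

lemma FP_seq_single: "fprod m x {n} = Some (x n)"
  by (simp add: fprod_def)

lemma fprod_restr:
  assumes "FP_seq S m x" "FP m x \<subseteq> X"
  shows "fprod (restr X m) x F = fprod m x F"
proof (cases "finite F \<and> F \<noteq> {}")
  case False
  then show ?thesis by (auto simp: fprod_def)
next
  case True
  define L where "L = sorted_list_of_set F"
  have Lne: "L \<noteq> []" using True by (simp add: L_def)
  have xX: "x n \<in> X" for n
    using assms(2) FP_seq_single[of m x n] unfolding FP_def by blast
  have "lprod (restr X m) (map x L) = lprod m (map x L)"
  proof (rule lprod_restr)
    show "set (map x L) \<subseteq> X" using xX by auto
    show "\<forall>k. 1 \<le> k \<and> k \<le> length (map x L) \<longrightarrow> (\<exists>c\<in>X. lprod m (take k (map x L)) = Some c)"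
    proof (intro allI impI)
      fix k assume k: "1 \<le> k \<and> k \<le> length (map x L)"
      define G where "G = set (take k L)"
      have sL: "sorted L" "distinct L" by (auto simp: L_def)
      have G1: "sorted_list_of_set G = take k L"
        unfolding G_def by (rule sl_set_sorted) (use sL in \<open>auto simp: sorted_wrt_take\<close>)
      have "take k L \<noteq> []" using k Lne by auto
      then have G2: "finite G" "G \<noteq> {}" by (auto simp: G_def)
      then obtain c where c: "fprod m x G = Some c" using assms(1) unfolding FP_seq_def by auto
      then have "c \<in> FP m x" using G2 unfolding FP_def by auto
      moreover have "lprod m (take k (map x L)) = Some c"
        using c G1 by (simp add: fprod_def take_map)
      ultimately show "\<exists>c\<in>X. lprod m (take k (map x L)) = Some c" using assms(2) by auto
    qed
  qed
  then show ?thesis by (simp add: fprod_def L_def)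
qed

lemma fprod_shift:
  "fprod m (\<lambda>n. x (n + k)) F = fprod m x ((\<lambda>n. n + k) ` F)"
proof (cases "finite F")
  case False
  have inj: "inj_on (\<lambda>n::nat. n + k) F" by (simp add: inj_on_def)
  have "infinite ((\<lambda>n. n + k) ` F)"
    using False finite_imageD[OF _ inj] by blast
  then show ?thesis using False unfolding fprod_def by simp
next
  case True
  define L where "L = sorted_list_of_set F"
  have sL: "sorted L" "distinct L" "set L = F" using True unfolding L_def by auto
  define M where "M = map (\<lambda>n. n + k) L"
  have M1: "set M = (\<lambda>n. n + k) ` F" unfolding M_def using sL(3) by simp
  have M2: "sorted M" unfolding M_def using sL(1) by (simp add: sorted_map)
  have M3: "distinct M" unfolding M_def using sL(2) by (simp add: distinct_map inj_on_def)
  have "sorted_list_of_set ((\<lambda>n. n + k) ` F) = M"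
    using sl_set_sorted[OF M2 M3] M1 by simp
  then have "map x (sorted_list_of_set ((\<lambda>n. n + k) ` F)) = map (\<lambda>n. x (n + k)) L"
    unfolding M_def by simp
  then show ?thesis unfolding fprod_def L_def by simp
qed

lemma FP_shift_sub: "FP m (\<lambda>n. x (n + k)) \<subseteq> FP m x"
proof
  fix c assume "c \<in> FP m (\<lambda>n. x (n + k))"
  then obtain F where F: "finite F" "F \<noteq> {}" "fprod m (\<lambda>n. x (n + k)) F = Some c"
    unfolding FP_def by blast
  have "fprod m x ((\<lambda>n. n + k) ` F) = Some c" using F(3) fprod_shift[of m x k F] by simp
  moreover have "finite ((\<lambda>n. n + k) ` F)" "(\<lambda>n. n + k) ` F \<noteq> {}" using F by auto
  ultimately show "c \<in> FP m x" unfolding FP_def by blast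
qed

lemma FP_seq_shift: assumes "FP_seq S m x" shows "FP_seq S m (\<lambda>n. x (n + k))"
  unfolding FP_seq_def
proof (intro conjI allI impI)
  fix n show "x (n + k) \<in> S" using assms unfolding FP_seq_def by blast
next
  fix F :: "nat set" assume F: "finite F \<and> F \<noteq> {}"
  have "finite ((\<lambda>n. n + k) ` F) \<and> (\<lambda>n. n + k) ` F \<noteq> {}" using F by auto
  then have "fprod m x ((\<lambda>n. n + k) ` F) \<noteq> None" using assms unfolding FP_seq_def by blast
  then show "fprod m (\<lambda>n. x (n + k)) F \<noteq> None" using fprod_shift[of m x k F] by simp
qed

lemma FP_restr_eq:
  assumes "FP_seq S m x" "FP m x \<subseteq> X"
  shows "FP (restr X m) x = FP m x"
  using fprod_restr[OF assms] unfolding FP_def by simp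

lemma FP_seq_restr:
  assumes "FP_seq S m x" "FP m x \<subseteq> X"
  shows "FP_seq X (restr X m) x"
proof -
  have "x n \<in> X" for n
    using assms(2) FP_seq_single[of m x n] unfolding FP_def by blast
  then show ?thesis using assms(1) fprod_restr[OF assms] unfolding FP_seq_def by simp
qed

lemma uf_empty: "ultrafilter_on S U \<Longrightarrow> {} \<notin> U"
  unfolding ultrafilter_on_def by (elim conjE)
lemma uf_sub: assumes "ultrafilter_on S U" "A \<in> U" shows "A \<subseteq> S"
proof - have "U \<subseteq> Pow S" using assms(1) unfolding ultrafilter_on_def by (elim conjE)
  then show ?thesis using assms(2) by blast qed
lemma uf_int: assumes "ultrafilter_on S U" "A \<in> U" "B \<in> U" shows "A \<inter> B \<in> U"
proof - have "\<forall>A\<in>U. \<forall>B\<in>U. A \<inter> B \<in> U" using assms(1) unfolding ultrafilter_on_def by (elim conjE)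
  then show ?thesis using assms(2,3) by blast qed
lemma uf_up: assumes "ultrafilter_on S U" "A \<in> U" "A \<subseteq> B" "B \<subseteq> S" shows "B \<in> U"
proof - have "\<forall>A\<in>U. \<forall>B. A \<subseteq> B \<and> B \<subseteq> S \<longrightarrow> B \<in> U" using assms(1) unfolding ultrafilter_on_def by (elim conjE)
  then show ?thesis using assms(2,3,4) by blast qed
lemma uf_compl: assumes "ultrafilter_on S U" "A \<subseteq> S" "A \<notin> U" shows "S - A \<in> U"
proof - have "\<forall>A. A \<subseteq> S \<longrightarrow> A \<in> U \<or> S - A \<in> U" using assms(1) unfolding ultrafilter_on_def by (elim conjE)
  then show ?thesis using assms(2,3) by blast qed

lemma finite_notin_uf:
  assumes "ultrafilter_on S U" "nonprincipal S U"
  shows "finite F \<Longrightarrow> F \<subseteq> S \<Longrightarrow> F \<notin> U"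
proof (induction F rule: finite_induct)
  case empty
  then show ?case using uf_empty[OF assms(1)] by simp
next
  case (insert a F)
  show ?case
  proof
    assume ins: "insert a F \<in> U"
    have aS: "a \<in> S" using insert.prems by simp
    have "{a} \<notin> U" using assms(2) aS unfolding nonprincipal_def by blast
    then have "S - {a} \<in> U" using uf_compl[OF assms(1)] aS by blast
    then have "insert a F \<inter> (S - {a}) \<in> U" using uf_int[OF assms(1) ins] by blast
    moreover have "insert a F \<inter> (S - {a}) \<subseteq> F" by blast
    moreover have "F \<subseteq> S" using insert.prems by simp
    ultimately have "F \<in> U" using uf_up[OF assms(1)] by blast
    then show False using insert.IH \<open>F \<subseteq> S\<close> by blast
  qed
qed

lemma union_in_uf:
  assumes "ultrafilter_on S U"
  shows "finite Xs \<Longrightarrow> \<Union>Xs \<subseteq> S \<Longrightarrow> \<Union>Xs \<in> U \<Longrightarrow> \<exists>X\<in>Xs. X \<in> U"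
proof (induction Xs rule: finite_induct)
  case empty
  then show ?case using uf_empty[OF assms] by simp
next
  case (insert X Xs)
  show ?case
  proof (cases "X \<in> U")
    case True then show ?thesis by blast
  next
    case False
    have XS: "X \<subseteq> S" "\<Union>Xs \<subseteq> S" using insert.prems(1) by auto
    have "S - X \<in> U" using uf_compl[OF assms XS(1) False] .
    then have "\<Union>(insert X Xs) \<inter> (S - X) \<in> U" using uf_int[OF assms insert.prems(2)] by blast
    moreover have "\<Union>(insert X Xs) \<inter> (S - X) \<subseteq> \<Union>Xs" by blast
    ultimately have "\<Union>Xs \<in> U" using uf_up[OF assms] XS(2) by blast
    then show ?thesis using insert.IH XS(2) by blast
  qed
qed

theorem mainTheorem4:
  fixes S :: "'a set" and m :: "'a \<Rightarrow> 'a \<Rightarrow> 'a option" and U :: "'a set set"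
  assumes "psemigroup S m"
    and "IP_regular S m"
    and "finite (idempotents S m)"
    and "ultrafilter_on S U"
    and "nonprincipal S U"
    and "strongly_productive S m U"
  shows "regular_uf S m U"
proof -
  have uf: "ultrafilter_on S U" by fact
  obtain Xs where Xs: "finite Xs" "\<Union>Xs = S - idempotents S m"
    "\<forall>X\<in>Xs. strongly_IP_regular X (restr X m)"
    using assms(2) unfolding IP_regular_def by blast
  have ES: "idempotents S m \<subseteq> S" unfolding idempotents_def by blast
  have "idempotents S m \<notin> U"
    using finite_notin_uf[OF uf assms(5) assms(3) ES] .
  then have "S - idempotents S m \<in> U"
    using uf_compl[OF uf ES] by blast
  then obtain X where X: "X \<in> Xs" "X \<in> U"
    using union_in_uf[OF uf Xs(1)] Xs(2) by auto
  have XS: "X \<subseteq> S" using X Xs(2) by auto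
  have sr: "strongly_IP_regular X (restr X m)" using X Xs(3) by auto
  have key: "\<forall>x. FP_seq S m x \<and> FP m x \<subseteq> X \<longrightarrow> x0FP1 m x \<notin> U"
  proof (intro allI impI notI)
    fix x assume x: "FP_seq S m x \<and> FP m x \<subseteq> X" and inU: "x0FP1 m x \<in> U"
    define x' where "x' = (\<lambda>n. x (n + 1))"
    have x'seq: "FP_seq S m x'" using x FP_seq_shift unfolding x'_def by blast
    have x'sub: "FP m x' \<subseteq> X" using x FP_shift_sub[of m x 1] unfolding x'_def by blast
    have x0: "x 0 \<in> X" using x FP_seq_single[of m x 0] unfolding FP_def by blast
    have A: "x0FP1 m x \<inter> X \<in> U" using uf_int[OF uf inU X(2)] .
    have Asub: "x0FP1 m x \<inter> X \<subseteq> x0FP1 (restr X m) x"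
    proof
      fix c assume c: "c \<in> x0FP1 m x \<inter> X"
      then obtain d where d: "d \<in> FP m x'" "m (x 0) d = Some c"
        unfolding x0FP1_def FPk_def x'_def by auto
      have "d \<in> FP (restr X m) x'" using FP_restr_eq[OF x'seq x'sub] d by simp
      moreover have "restr X m (x 0) d = Some c"
        using d x0 x'sub c by (auto simp: restr_def)
      ultimately show "c \<in> x0FP1 (restr X m) x"
        unfolding x0FP1_def FPk_def x'_def by auto
    qed
    obtain y where y: "FP_seq S m y" "FP m y \<subseteq> x0FP1 m x \<inter> X"
      using assms(6) A unfolding strongly_productive_def by blast
    have "FP_seq X (restr X m) y" using FP_seq_restr y by blast
    moreover have "FP (restr X m) y \<subseteq> x0FP1 (restr X m) x"
      using FP_restr_eq[of S m y X] y Asub by auto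
    ultimately have "IP_set X (restr X m) (x0FP1 (restr X m) x)"
      unfolding IP_set_def by blast
    moreover have "FP_seq X (restr X m) x" using FP_seq_restr x by blast
    ultimately show False using sr unfolding strongly_IP_regular_def by blast
  qed
  have "\<exists>B\<in>U. \<forall>x. FP_seq S m x \<and> FP m x \<subseteq> B \<longrightarrow> x0FP1 m x \<notin> U"
    using X(2) key by (rule bexI[rotated])
  then show ?thesis using assms(5,6) unfolding regular_uf_def by (intro conjI)
qed

end
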